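(* Assume (C) and (I). Fix $i\in S$ and $Q,Q^*\in\mathcal Q$. Then, as $\varepsilon\downarrow0$, $$F(i,Q\otimes_\varepsilon Q^* )=F_\varepsilon(i,Q^* )+\big[f(0,i,Q_i)+F_\varepsilon(Q^* )\cdot Q_i\big]\varepsilon+o(\varepsilon).$$ Suppose in addition that condition (H) holds. Then, as $\varepsilon\downarrow0$, $$F(i,Q^* )-F(i,Q\otimes_\varepsilon Q^* )=\big(\Gamma^{Q^*}_i(Q^*_i)-\Gamma^{Q^*}_i(Q_i)\big)\varepsilon+o(\varepsilon).$$
   Context: Let $S=\{1,\dots,N\}$, $N\in\mathbb N$. For $i\in S$ let $E_i=\{q=(q_1,\dots,q_N)\in\mathbb R^N: q_j\ge0\text{ for }j\ne i,\ q_i=-\sum_{j\ne i}q_j\}$ and let $D_i\subseteq E_i$ be given. Let $\mathcal Q=\{Q\in\mathbb R^{N\times N}: Q_i\in D_i\ \forall i\in S\}$, where $Q_i$ is the $i$-th row of $Q$ and $q_{ij}$ its entries. For $Q\in\mathcal Q$, $X=(X_t)_{t\ge0}$ is a time-homogeneous continuous-time Markov chain on $S$ with generator $Q$, and $\mathbb E_{i,Q}$ (or $\mathbb E_i$) is the expectation given $X_0=i$. A payoff function $f$ assigns a real number $f(t,i,\mathbf q)$ to each $t\ge0$, $i\in S$, $\mathbf q\in D_i$. Conditions: (C) $t\mapsto f(t,i,\mathbf q)$ is continuous on $[0,\infty)$ for each $i,\mathbf q$; (I) $\int_0^\infty\sup_{i\in S,\mathbf q\in D_i,\|\mathbf q\|\le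 c}|f(t,i,\mathbf q)|\,dt<\infty$ for every $c>0$ (Euclidean norm). Define $F(i,Q)=\mathbb E_{i,Q}[\int_0^\infty f(t,X_t,Q_{X_t})dt]$, $F(Q)=(F(1,Q),\dots,F(N,Q))$, and for $\varepsilon>0$, $F_\varepsilon(i,Q)=\mathbb E_{i,Q}[\int_0^\infty f(t+\varepsilon,X_t,Q_{X_t})dt]$, $F_\varepsilon(Q)=(F_\varepsilon(1,Q),\dots,F_\varepsilon(N,Q))$. For $Q,Q'\in\mathcal Q$ and $\varepsilon>0$, $Q\otimes_\varepsilon Q'$ means that $X$ evolves with generator $Q$ on $[0,\varepsilon]$ and with generator $Q'$ on $(\varepsilon,\infty)$; $F(i,Q\otimes_\varepsilon Q')=\mathbb E_i[\int_0^\varepsilon f(t,X_t,Q_{X_t})dt+\int_\varepsilon^\infty f(t,X_t,Q'_{X_t})dt]$ with $X_0=i$. For $Q^*\in\mathcal Q$, $i\in S$, $\mathbf q\in D_i$, put $\Gamma^{Q^*}_i(\mathbf q)=f(0,i,\mathbf q)+\mathbf q\cdot F(Q^* )$. Condition (H): there is a nonnegative function $h(t,\varepsilon;i,\mathbf q)$ with $|f(t+\varepsilon,i,\mathbf q)-f(t,i,\mathbf q)|\le h(t,\varepsilon;i,\mathbf q)$ for all $t\ge0,\varepsilon>0,i\in S,\mathbf q\in D_i$, such that $h$ is nondecreasing in $\varepsilon$, $\lim_{\varepsilon\downarrow0}h(t,\varepsilon;i,\mathbf q)=0$, and $\int_0^\infty h(t,\varepsilon;i,\mathbf q)dt<\infty$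 for all sufficiently small $\varepsilon>0$. *)

theory Defs
  imports "HOL-Analysis.Analysis"
begin

text \<open>State space S = {1..N} is modelled by a finite type 'n. Generators are
  real matrices real^'n^'n, rows are Q $ i.\<close>

definition E_set :: "'n::finite \<Rightarrow> (real^'n) set" where
  "E_set i = {q. (\<forall>j. j \<noteq> i \<longrightarrow> q $ j \<ge> 0) \<and> q $ i = - (\<Sum>j\<in>UNIV - {i}. q $ j)}"

definition genset :: "('n::finite \<Rightarrow> (real^'n) set) \<Rightarrow> (real^'n^'n) set" where
  "genset D = {Q. \<forall>i. Q $ i \<in> D i}"

definition mat_pow :: "real^'n^'n \<Rightarrow> nat \<Rightarrow> real^'n^'n" where
  "mat_pow Q n = ((\<lambda>M. M ** Q) ^^ n) (mat 1)"

definition trans_mat :: "real^'n^'n \<Rightarrow> real \<Rightarrow> real^'n^'n" where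
  "trans_mat Q t = (\<Sum>n. (t ^ n / fact n) *\<^sub>R mat_pow Q n)"

text \<open>E_{i,Q}[ int_0^oo g(t, X_t, Q_{X_t}) dt ], computed via the transition matrix.\<close>

definition Fval :: "(real \<Rightarrow> 'n::finite \<Rightarrow> real^'n \<Rightarrow> real) \<Rightarrow> real^'n^'n \<Rightarrow> 'n \<Rightarrow> real" where
  "Fval f Q i = (LBINT t:{0..}. (\<Sum>j\<in>UNIV. trans_mat Q t $ i $ j * f t j (Q $ j)))"

definition Fshift :: "(real \<Rightarrow> 'n::finite \<Rightarrow> real^'n \<Rightarrow> real) \<Rightarrow> real \<Rightarrow> real^'n^'n \<Rightarrow> 'n \<Rightarrow> real" where
  "Fshift f \<epsilon> Q i = (LBINT t:{0..}. (\<Sum>j\<in>UNIV. trans_mat Q t $ i $ j * f (t + \<epsilon>) j (Q $ j)))"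

text \<open>F(i, Q \<otimes>_eps Q'): generator Q on [0,eps], generator Q' afterwards
  (Markov property at time eps).\<close>

definition Fswitch :: "(real \<Rightarrow> 'n::finite \<Rightarrow> real^'n \<Rightarrow> real) \<Rightarrow> real^'n^'n \<Rightarrow> real^'n^'n
    \<Rightarrow> real \<Rightarrow> 'n \<Rightarrow> real" where
  "Fswitch f Q Q' \<epsilon> i =
     (LBINT t:{0..\<epsilon>}. (\<Sum>j\<in>UNIV. trans_mat Q t $ i $ j * f t j (Q $ j)))
   + (LBINT t:{\<epsilon><..}. (\<Sum>j\<in>UNIV. (trans_mat Q \<epsilon> ** trans_mat Q' (t - \<epsilon>)) $ i $ j * f t j (Q' $ j)))"

definition GammaQ :: "(real \<Rightarrow> 'n::finite \<Rightarrow> real^'n \<Rightarrow> real) \<Rightarrow> real^'n^'n \<Rightarrow> 'n \<Rightarrow> real^'n \<Rightarrow> real" where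
  "GammaQ f Qs i q = f 0 i q + q \<bullet> (\<chi> j. Fval f Qs j)"

definition condC :: "('n::finite \<Rightarrow> (real^'n) set) \<Rightarrow> (real \<Rightarrow> 'n \<Rightarrow> real^'n \<Rightarrow> real) \<Rightarrow> bool" where
  "condC D f = (\<forall>i. \<forall>q\<in>D i. continuous_on {0..} (\<lambda>t. f t i q))"

definition condI :: "('n::finite \<Rightarrow> (real^'n) set) \<Rightarrow> (real \<Rightarrow> 'n \<Rightarrow> real^'n \<Rightarrow> real) \<Rightarrow> bool" where
  "condI D f = (\<forall>c>0. (\<integral>\<^sup>+ t. (SUP p\<in>{(i, q). q \<in> D i \<and> norm q \<le> c}.
        ennreal \<bar>f t (fst p) (snd p)\<bar>) * indicator {0..} t \<partial>lborel) < \<infinity>)"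

definition condH :: "('n::finite \<Rightarrow> (real^'n) set) \<Rightarrow> (real \<Rightarrow> 'n \<Rightarrow> real^'n \<Rightarrow> real) \<Rightarrow> bool" where
  "condH D f = (\<exists>h :: real \<Rightarrow> real \<Rightarrow> 'n \<Rightarrow> real^'n \<Rightarrow> real.
     (\<forall>t\<ge>0. \<forall>\<epsilon>>0. \<forall>i. \<forall>q\<in>D i.
        h t \<epsilon> i q \<ge> 0 \<and> \<bar>f (t + \<epsilon>) i q - f t i q\<bar> \<le> h t \<epsilon> i q) \<and>
     (\<forall>t\<ge>0. \<forall>i. \<forall>q\<in>D i. \<forall>\<epsilon>1 \<epsilon>2. 0 < \<epsilon>1 \<longrightarrow> \<epsilon>1 \<le> \<epsilon>2 \<longrightarrow> h t \<epsilon>1 i q \<le> h t \<epsilon>2 i q) \<and>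
     (\<forall>t\<ge>0. \<forall>i. \<forall>q\<in>D i. ((\<lambda>\<epsilon>. h t \<epsilon> i q) \<longlongrightarrow> 0) (at_right 0)) \<and>
     (\<forall>i. \<forall>q\<in>D i. \<forall>\<^sub>F \<epsilon> in at_right 0.
        (\<integral>\<^sup>+ t. ennreal (h t \<epsilon> i q) * indicator {0..} t \<partial>lborel) < \<infinity>))"

end

theory Submission
  imports Defs
begin


typedef ('n::finite) sqm = "UNIV :: (real^'n^'n) set" by simp

lemma sqm_eq_iff: "x = y \<longleftrightarrow> Rep_sqm x = Rep_sqm y"
  by (simp add: Rep_sqm_inject)

definition rownorm :: "real^'n^'n \<Rightarrow> real" where
  "rownorm A = Max (range (\<lambda>i::'n::finite. \<Sum>j\<in>UNIV. \<bar>A $ i $ j\<bar>))"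

lemma rownorm_ge: "(\<Sum>j\<in>UNIV. \<bar>A $ i $ j\<bar>) \<le> rownorm A"
  unfolding rownorm_def by (rule Max_ge) auto

lemma rownorm_le_iff: "rownorm A \<le> B \<longleftrightarrow> (\<forall>i. (\<Sum>j\<in>UNIV. \<bar>A $ i $ j\<bar>) \<le> B)"
  unfolding rownorm_def by (subst Max_le_iff) auto

lemma rownorm_nonneg: "0 \<le> rownorm A"
  using rownorm_ge[of A] order_trans by (meson sum_nonneg abs_ge_zero)

lemma rownorm_entry: "\<bar>A $ i $ j\<bar> \<le> rownorm A"
proof -
  have "\<bar>A $ i $ j\<bar> \<le> (\<Sum>j\<in>UNIV. \<bar>A $ i $ j\<bar>)"
    by (rule member_le_sum) auto
  then show ?thesis using rownorm_ge[of A i] by linarith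
qed

lemma rownorm_triangle: "rownorm (A + B) \<le> rownorm A + rownorm B"
proof (subst rownorm_le_iff, intro allI)
  fix i
  have "(\<Sum>j\<in>UNIV. \<bar>(A + B) $ i $ j\<bar>) \<le> (\<Sum>j\<in>UNIV. \<bar>A $ i $ j\<bar> + \<bar>B $ i $ j\<bar>)"
    by (rule sum_mono) auto
  also have "\<dots> \<le> rownorm A + rownorm B"
    using rownorm_ge[of A i] rownorm_ge[of B i] by (simp add: sum.distrib)
  finally show "(\<Sum>j\<in>UNIV. \<bar>(A + B) $ i $ j\<bar>) \<le> rownorm A + rownorm B" .
qed

lemma rowsum_scaleR: "(\<Sum>j\<in>UNIV. \<bar>(r *\<^sub>R A) $ i $ j\<bar>) = \<bar>r\<bar> * (\<Sum>j\<in>UNIV. \<bar>A $ i $ j\<bar>)"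
  by (simp add: abs_mult sum_distrib_left)

lemma rownorm_scaleR: "rownorm (r *\<^sub>R A) = \<bar>r\<bar> * rownorm A"
proof (rule antisym)
  show "rownorm (r *\<^sub>R A) \<le> \<bar>r\<bar> * rownorm A"
    unfolding rownorm_le_iff rowsum_scaleR
    by (intro allI mult_left_mono rownorm_ge) simp
  show "\<bar>r\<bar> * rownorm A \<le> rownorm (r *\<^sub>R A)"
  proof (cases "r = 0")
    case True then show ?thesis using rownorm_nonneg by simp
  next
    case False
    have "rownorm A \<le> rownorm (r *\<^sub>R A) / \<bar>r\<bar>"
      unfolding rownorm_le_iff
    proof
      fix i
      have "\<bar>r\<bar> * (\<Sum>j\<in>UNIV. \<bar>A $ i $ j\<bar>) \<le> rownorm (r *\<^sub>R A)"
        using rownorm_ge[of "r *\<^sub>R A" i] unfolding rowsum_scaleR .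
      then show "(\<Sum>j\<in>UNIV. \<bar>A $ i $ j\<bar>) \<le> rownorm (r *\<^sub>R A) / \<bar>r\<bar>"
        using False by (simp add: field_simps)
    qed
    then show ?thesis using False by (simp add: field_simps)
  qed
qed

lemma rownorm_zero_iff: "rownorm A = 0 \<longleftrightarrow> A = 0"
proof
  assume "rownorm A = 0"
  then have "\<bar>A $ i $ j\<bar> \<le> 0" for i j using rownorm_entry[of A i j] by simp
  then show "A = 0" by (simp add: vec_eq_iff)
next
  assume "A = 0"
  then show "rownorm A = 0" by (simp add: rownorm_def)
qed

lemma rownorm_mult: "rownorm (A ** B) \<le> rownorm A * rownorm B"
proof (subst rownorm_le_iff, intro allI)
  fix i
  have "(\<Sum>j\<in>UNIV. \<bar>(A ** B) $ i $ j\<bar>) \<le> (\<Sum>j\<in>UNIV. \<Sum>k\<in>UNIV. \<bar>A $ i $ k\<bar> * \<bar>B $ k $ j\<bar>)"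
  proof (rule sum_mono)
    fix j
    have "\<bar>(A ** B) $ i $ j\<bar> = \<bar>\<Sum>k\<in>UNIV. A $ i $ k * B $ k $ j\<bar>"
      by (simp add: matrix_matrix_mult_def)
    also have "\<dots> \<le> (\<Sum>k\<in>UNIV. \<bar>A $ i $ k * B $ k $ j\<bar>)" by (rule sum_abs)
    finally show "\<bar>(A ** B) $ i $ j\<bar> \<le> (\<Sum>k\<in>UNIV. \<bar>A $ i $ k\<bar> * \<bar>B $ k $ j\<bar>)"
      by (simp add: abs_mult)
  qed
  also have "\<dots> = (\<Sum>k\<in>UNIV. \<bar>A $ i $ k\<bar> * (\<Sum>j\<in>UNIV. \<bar>B $ k $ j\<bar>))"
    by (subst sum.swap) (simp add: sum_distrib_left)
  also have "\<dots> \<le> (\<Sum>k\<in>UNIV. \<bar>A $ i $ k\<bar> * rownorm B)"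
    by (rule sum_mono) (auto intro: mult_left_mono rownorm_ge)
  also have "\<dots> \<le> rownorm A * rownorm B"
    by (simp add: sum_distrib_right[symmetric] mult_right_mono rownorm_ge rownorm_nonneg)
  finally show "(\<Sum>j\<in>UNIV. \<bar>(A ** B) $ i $ j\<bar>) \<le> rownorm A * rownorm B" .
qed

lemma rownorm_one: "rownorm (mat 1 :: real^'n^'n) = 1"
proof (rule antisym)
  have r: "(\<Sum>j\<in>UNIV. \<bar>(mat 1 :: real^'n^'n) $ i $ j\<bar>) = 1" for i
  proof -
    have "(\<Sum>j\<in>UNIV. \<bar>(mat 1 :: real^'n^'n) $ i $ j\<bar>) = (\<Sum>j\<in>UNIV. if i = j then 1 else 0)"
      by (rule sum.cong) (auto simp: mat_def)
    then show ?thesis by simp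
  qed
  show "rownorm (mat 1 :: real^'n^'n) \<le> 1" using r by (simp add: rownorm_le_iff)
  show "1 \<le> rownorm (mat 1 :: real^'n^'n)" using rownorm_ge[of "mat 1 :: real^'n^'n" undefined] r by simp
qed

lemma norm_le_rownorm: "norm A \<le> real CARD('n) * rownorm (A :: real^'n^'n::finite)"
proof -
  have "norm A \<le> (\<Sum>i\<in>UNIV. norm (A $ i))" by (simp add: norm_vec_def L2_set_le_sum)
  also have "\<dots> \<le> (\<Sum>i\<in>(UNIV::'n set). rownorm A)"
  proof (rule sum_mono)
    fix i
    have "norm (A $ i) \<le> (\<Sum>j\<in>UNIV. \<bar>A $ i $ j\<bar>)"
      using norm_le_l1_cart[of "A $ i"] by simp
    then show "norm (A $ i) \<le> rownorm A" using rownorm_ge[of A i] by linarith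
  qed
  finally show ?thesis by simp
qed

lemma rownorm_le_norm: "rownorm (A :: real^'n^'n::finite) \<le> real CARD('n) * norm A"
proof (subst rownorm_le_iff, intro allI)
  fix i
  have "(\<Sum>j\<in>UNIV. \<bar>A $ i $ j\<bar>) \<le> (\<Sum>j\<in>(UNIV::'n set). norm A)"
  proof (rule sum_mono)
    fix j
    have "\<bar>A $ i $ j\<bar> \<le> norm (A $ i)" using component_le_norm_cart[of "A $ i" j] by simp
    also have "\<dots> \<le> norm A" by (rule Finite_Cartesian_Product.norm_nth_le)
    finally show "\<bar>A $ i $ j\<bar> \<le> norm A" .
  qed
  then show "(\<Sum>j\<in>UNIV. \<bar>A $ i $ j\<bar>) \<le> real CARD('n) * norm A" by simp
qed

instantiation sqm :: (finite) real_normed_algebra_1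
begin

definition "0 = Abs_sqm 0"
definition "1 = Abs_sqm (mat 1)"
definition "x + y = Abs_sqm (Rep_sqm x + Rep_sqm y)"
definition "x - y = Abs_sqm (Rep_sqm x - Rep_sqm y)"
definition "- x = Abs_sqm (- Rep_sqm x)"
definition "x * y = Abs_sqm (Rep_sqm x ** Rep_sqm y)"
definition "scaleR r x = Abs_sqm (r *\<^sub>R Rep_sqm x)"
definition "norm x = rownorm (Rep_sqm x)"
definition "sgn x = scaleR (inverse (norm x)) x" for x :: "'a::finite sqm"
definition "dist x y = norm (x - y)" for x y :: "'a::finite sqm"
definition "uniformity = (INF e\<in>{0<..}. principal {(x :: 'a::finite sqm, y). dist x y < e})"
definition "open U = (\<forall>x\<in>U. \<forall>\<^sub>F (x', y) in uniformity. x' = x \<longrightarrow> y \<in> U)" for U :: "'a::finite sqm set"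

lemma Rep_sqm_ops [simp]:
  "Rep_sqm 0 = 0" "Rep_sqm 1 = mat 1"
  "Rep_sqm (x + y) = Rep_sqm x + Rep_sqm y"
  "Rep_sqm (x - y) = Rep_sqm x - Rep_sqm y"
  "Rep_sqm (- x) = - Rep_sqm x"
  "Rep_sqm (x * y) = Rep_sqm x ** Rep_sqm y"
  "Rep_sqm (r *\<^sub>R x) = r *\<^sub>R Rep_sqm x"
  by (simp_all add: zero_sqm_def one_sqm_def plus_sqm_def minus_sqm_def uminus_sqm_def
      times_sqm_def scaleR_sqm_def Abs_sqm_inverse)

instance
proof
  fix x y z :: "'a::finite sqm" and a b :: real
  show "a *\<^sub>R (x + y) = a *\<^sub>R x + a *\<^sub>R y" by (simp add: sqm_eq_iff scaleR_add_right)
  show "(a + b) *\<^sub>R x = a *\<^sub>R x + b *\<^sub>R x" by (simp add: sqm_eq_iff scaleR_add_left)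
  show "a *\<^sub>R b *\<^sub>R x = (a * b) *\<^sub>R x" by (simp add: sqm_eq_iff)
  show "1 *\<^sub>R x = x" by (simp add: sqm_eq_iff)
  show "x + y + z = x + (y + z)" by (simp add: sqm_eq_iff add.assoc)
  show "x + y = y + x" by (simp add: sqm_eq_iff add.commute)
  show "0 + x = x" by (simp add: sqm_eq_iff)
  show "- x + x = 0" by (simp add: sqm_eq_iff)
  show "x - y = x + - y" by (simp add: sqm_eq_iff)
  show "a *\<^sub>R x * y = a *\<^sub>R (x * y)" by (simp add: sqm_eq_iff scalar_matrix_assoc[symmetric])
  show "x * a *\<^sub>R y = a *\<^sub>R (x * y)" by (simp add: sqm_eq_iff matrix_scalar_ac scalar_matrix_assoc[symmetric])
  show "x * y * z = x * (y * z)" by (simp add: sqm_eq_iff matrix_mul_assoc)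
  show "(x + y) * z = x * z + y * z" by (simp add: sqm_eq_iff matrix_matrix_mult_def vec_eq_iff sum.distrib distrib_right)
  show "x * (y + z) = x * y + x * z" by (simp add: sqm_eq_iff matrix_add_ldistrib)
  show "1 * x = x" by (simp add: sqm_eq_iff)
  show "x * 1 = x" by (simp add: sqm_eq_iff)
  show "(0::'a::finite sqm) \<noteq> 1" by (simp add: sqm_eq_iff mat_def vec_eq_iff)
  show "sgn x = scaleR (inverse (norm x)) x" by (simp add: sgn_sqm_def)
  show "dist x y = norm (x - y)" by (simp add: dist_sqm_def)
  show "uniformity = (INF e\<in>{0<..}. principal {(x :: 'a::finite sqm, y). dist x y < e})"
    by (simp add: uniformity_sqm_def)
  show "open U = (\<forall>x\<in>U. \<forall>\<^sub>F (x', y) in uniformity. x' = x \<longrightarrow> y \<in> U)" for U :: "'a::finite sqm set"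
    by (simp add: open_sqm_def)
  show "(norm x = 0) = (x = 0)" by (simp add: norm_sqm_def rownorm_zero_iff sqm_eq_iff)
  show "norm (x + y) \<le> norm x + norm y" by (simp add: norm_sqm_def rownorm_triangle)
  show "norm (a *\<^sub>R x) = \<bar>a\<bar> * norm x" by (simp add: norm_sqm_def rownorm_scaleR)
  show "norm (x * y) \<le> norm x * norm y" by (simp add: norm_sqm_def rownorm_mult)
  show "norm (1::'a::finite sqm) = 1" by (simp add: norm_sqm_def rownorm_one)
qed
end



lemma bounded_linear_Rep_sqm: "bounded_linear (Rep_sqm :: 'n::finite sqm \<Rightarrow> real^'n^'n)"
proof (rule bounded_linear_intro[where K="real CARD('n)"])
  fix x y :: "'n sqm" and r :: real
  show "Rep_sqm (x + y) = Rep_sqm x + Rep_sqm y" by simp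
  show "Rep_sqm (r *\<^sub>R x) = r *\<^sub>R Rep_sqm x" by simp
  show "norm (Rep_sqm x) \<le> norm x * real CARD('n)"
    using norm_le_rownorm[of "Rep_sqm x"] by (simp add: norm_sqm_def mult.commute)
qed

lemma bounded_linear_Abs_sqm: "bounded_linear (Abs_sqm :: real^'n^'n \<Rightarrow> 'n::finite sqm)"
proof (rule bounded_linear_intro[where K="real CARD('n)"])
  fix x y :: "real^'n^'n" and r :: real
  show "Abs_sqm (x + y) = Abs_sqm x + Abs_sqm y" by (simp add: sqm_eq_iff Abs_sqm_inverse)
  show "Abs_sqm (r *\<^sub>R x) = r *\<^sub>R Abs_sqm x" by (simp add: sqm_eq_iff Abs_sqm_inverse)
  show "norm (Abs_sqm x) \<le> norm x * real CARD('n)"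
    using rownorm_le_norm[of x] by (simp add: norm_sqm_def mult.commute Abs_sqm_inverse)
qed

instance sqm :: (finite) banach
proof
  fix X :: "nat \<Rightarrow> 'a sqm"
  assume "Cauchy X"
  then have "Cauchy (\<lambda>n. Rep_sqm (X n))"
    by (rule bounded_linear.Cauchy[OF bounded_linear_Rep_sqm])
  then obtain L where "(\<lambda>n. Rep_sqm (X n)) \<longlonglongrightarrow> L"
    using Cauchy_convergent convergent_def by blast
  then have "(\<lambda>n. Abs_sqm (Rep_sqm (X n))) \<longlonglongrightarrow> Abs_sqm L"
    by (rule bounded_linear.tendsto[OF bounded_linear_Abs_sqm])
  then show "convergent X" by (auto simp: Rep_sqm_inverse convergent_def)
qed

lemma bounded_linear_entry: "bounded_linear (\<lambda>x::'n::finite sqm. Rep_sqm x $ i $ j)"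
proof -
  have "bounded_linear (\<lambda>x::real^'n^'n. x $ i $ j)"
    using bounded_linear_vec_nth bounded_linear_compose by blast
  then show ?thesis using bounded_linear_compose[OF _ bounded_linear_Rep_sqm] by blast
qed

lemma bounded_linear_rowsum: "bounded_linear (\<lambda>x::'n::finite sqm. \<Sum>j\<in>UNIV. Rep_sqm x $ i $ j)"
  by (rule bounded_linear_sum) (rule bounded_linear_entry)

lemma Rep_sqm_power: "Rep_sqm (Abs_sqm Q ^ n) = mat_pow Q n"
proof (induction n)
  case 0 then show ?case by (simp add: mat_pow_def)
next
  case (Suc n) then show ?case
    by (simp add: mat_pow_def power_Suc2 Abs_sqm_inverse del: power_Suc)
qed

lemma trans_mat_exp: "trans_mat Q t = Rep_sqm (exp (t *\<^sub>R Abs_sqm Q))"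
proof -
  have "Rep_sqm (exp (t *\<^sub>R Abs_sqm Q)) = (\<Sum>n. Rep_sqm ((t *\<^sub>R Abs_sqm Q) ^ n /\<^sub>R fact n))"
    unfolding exp_def by (rule bounded_linear.suminf[OF bounded_linear_Rep_sqm summable_exp_generic])
  also have "\<dots> = (\<Sum>n. (t ^ n / fact n) *\<^sub>R mat_pow Q n)"
    by (simp add: scaleR_power Rep_sqm_power divide_inverse_commute)
  finally show ?thesis by (simp add: trans_mat_def)
qed

lemma trans_mat_zero: "trans_mat Q 0 = mat 1"
  by (simp add: trans_mat_exp)

lemma trans_mat_add: "trans_mat Q (s + t) = trans_mat Q s ** trans_mat Q t"
proof -
  have "exp ((s + t) *\<^sub>R Abs_sqm Q) = exp (s *\<^sub>R Abs_sqm Q) * exp (t *\<^sub>R Abs_sqm Q)"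
    by (simp add: scaleR_add_left exp_add_commuting)
  then show ?thesis by (simp add: trans_mat_exp)
qed

lemma trans_mat_vderiv:
  "((\<lambda>t. trans_mat Q t $ i $ j) has_vector_derivative (trans_mat Q t ** Q) $ i $ j) (at t within S)"
proof -
  have "((\<lambda>t. Rep_sqm (exp (t *\<^sub>R Abs_sqm Q)) $ i $ j) has_vector_derivative
      Rep_sqm (exp (t *\<^sub>R Abs_sqm Q) * Abs_sqm Q) $ i $ j) (at t within S)"
    by (rule bounded_linear.has_vector_derivative[OF bounded_linear_entry
          exp_scaleR_has_vector_derivative_right])
  then show ?thesis by (simp add: trans_mat_exp Abs_sqm_inverse)
qed

lemma trans_mat_cont: "continuous_on S (\<lambda>t. trans_mat Q t $ i $ j)"
  using trans_mat_vderiv has_vector_derivative_continuous continuous_at_imp_continuous_on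
  by (metis continuous_on_eq_continuous_within)

lemma trans_mat_deriv0:
  "((\<lambda>e. (trans_mat Q e $ i $ j - mat 1 $ i $ j) / e) \<longlongrightarrow> Q $ i $ j) (at_right 0)"
proof -
  have "((\<lambda>t. trans_mat Q t $ i $ j) has_real_derivative (trans_mat Q 0 ** Q) $ i $ j) (at 0 within {0<..})"
    using trans_mat_vderiv has_real_derivative_iff_has_vector_derivative by blast
  then show ?thesis
    by (simp add: has_field_derivative_iff trans_mat_zero)
qed



lemma E_rowsum: "q \<in> E_set k \<Longrightarrow> (\<Sum>j\<in>UNIV. q $ j) = 0"
proof -
  assume "q \<in> E_set k"
  then have "q $ k = - (\<Sum>j\<in>UNIV - {k}. q $ j)" by (simp add: E_set_def)
  moreover have "(\<Sum>j\<in>UNIV. q $ j) = q $ k + (\<Sum>j\<in>UNIV - {k}. q $ j)"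
    by (simp add: sum.remove)
  ultimately show ?thesis by simp
qed

lemma E_offdiag: "q \<in> E_set k \<Longrightarrow> j \<noteq> k \<Longrightarrow> 0 \<le> q $ j"
  by (simp add: E_set_def)

lemma mat_one_rowsum: "(\<Sum>j\<in>UNIV. (mat 1 :: real^'n::finite^'n) $ i $ j) = 1"
proof -
  have "(\<Sum>j\<in>UNIV. (mat 1 :: real^'n^'n) $ i $ j) = (\<Sum>j\<in>UNIV. if i = j then 1 else 0)"
    by (rule sum.cong) (auto simp: mat_def)
  then show ?thesis by simp
qed

lemma mat_pow_rowsum:
  assumes "\<And>k. Q $ k \<in> E_set k"
  shows "(\<Sum>j\<in>UNIV. mat_pow Q n $ i $ j) = (if n = 0 then 1 else 0)"
proof (cases n)
  case 0 then show ?thesis by (simp add: mat_pow_def mat_one_rowsum)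
next
  case (Suc m)
  have "(\<Sum>j\<in>UNIV. (mat_pow Q m ** Q) $ i $ j) = (\<Sum>k\<in>UNIV. mat_pow Q m $ i $ k * (\<Sum>j\<in>UNIV. Q $ k $ j))"
  proof -
    have "(\<Sum>j\<in>UNIV. (mat_pow Q m ** Q) $ i $ j) = (\<Sum>j\<in>UNIV. \<Sum>k\<in>UNIV. mat_pow Q m $ i $ k * Q $ k $ j)"
      by (simp add: matrix_matrix_mult_def)
    also have "\<dots> = (\<Sum>k\<in>UNIV. \<Sum>j\<in>UNIV. mat_pow Q m $ i $ k * Q $ k $ j)"
      by (rule sum.swap)
    also have "\<dots> = (\<Sum>k\<in>UNIV. mat_pow Q m $ i $ k * (\<Sum>j\<in>UNIV. Q $ k $ j))"
      by (simp add: sum_distrib_left)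
    finally show ?thesis .
  qed
  also have "\<dots> = 0" using E_rowsum[OF assms] by simp
  finally show ?thesis using Suc by (simp add: mat_pow_def)
qed

lemma trans_mat_rowsum:
  assumes "\<And>k. Q $ k \<in> E_set k"
  shows "(\<Sum>j\<in>UNIV. trans_mat Q t $ i $ j) = 1"
proof -
  have "(\<Sum>j\<in>UNIV. trans_mat Q t $ i $ j) = (\<Sum>n. \<Sum>j\<in>UNIV. Rep_sqm ((t *\<^sub>R Abs_sqm Q) ^ n /\<^sub>R fact n) $ i $ j)"
    unfolding trans_mat_exp exp_def
    by (rule bounded_linear.suminf[OF bounded_linear_rowsum summable_exp_generic])
  also have "\<dots> = (\<Sum>n. if n = 0 then 1 else 0)"
  proof (rule suminf_cong)
    fix n
    have "(\<Sum>j\<in>UNIV. Rep_sqm ((t *\<^sub>R Abs_sqm Q) ^ n /\<^sub>R fact n) $ i $ j)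
        = (t ^ n / fact n) * (\<Sum>j\<in>UNIV. mat_pow Q n $ i $ j)"
      by (simp add: scaleR_power Rep_sqm_power sum_distrib_left divide_inverse_commute)
    also have "\<dots> = (if n = 0 then 1 else 0)" by (simp add: mat_pow_rowsum[OF assms])
    finally show "(\<Sum>j\<in>UNIV. Rep_sqm ((t *\<^sub>R Abs_sqm Q) ^ n /\<^sub>R fact n) $ i $ j) = (if n = 0 then 1 else 0)" .
  qed
  also have "\<dots> = 1"
    using sums_single[of 0 "\<lambda>_. 1::real"] sums_unique by fastforce
  finally show ?thesis .
qed

lemma Rep_power_nonneg:
  assumes "\<And>k j. 0 \<le> Rep_sqm B $ k $ j"
  shows "0 \<le> Rep_sqm (B ^ n) $ k $ j"
proof (induction n arbitrary: j)
  case 0 then show ?case by (simp add: mat_def)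
next
  case (Suc n)
  then show ?case
    by (simp add: power_Suc2 matrix_matrix_mult_def assms sum_nonneg del: power_Suc)
qed

lemma exp_nonneg_entries:
  assumes "\<And>k j. 0 \<le> Rep_sqm B $ k $ j" and "0 \<le> t"
  shows "0 \<le> Rep_sqm (exp (t *\<^sub>R B)) $ i $ j"
proof -
  have "Rep_sqm (exp (t *\<^sub>R B)) $ i $ j = (\<Sum>n. Rep_sqm ((t *\<^sub>R B) ^ n /\<^sub>R fact n) $ i $ j)"
    unfolding exp_def
    by (rule bounded_linear.suminf[OF bounded_linear_entry summable_exp_generic])
  also have "\<dots> \<ge> 0"
  proof (rule suminf_nonneg)
    show "summable (\<lambda>n. Rep_sqm ((t *\<^sub>R B) ^ n /\<^sub>R fact n) $ i $ j)"
      by (rule bounded_linear.summable[OF bounded_linear_entry summable_exp_generic])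
    fix n
    show "0 \<le> Rep_sqm ((t *\<^sub>R B) ^ n /\<^sub>R fact n) $ i $ j"
      using Rep_power_nonneg[OF assms(1), of n i j] assms(2)
      by (simp add: scaleR_power)
  qed
  finally show ?thesis .
qed

lemma trans_mat_nonneg:
  assumes "\<And>k. Q $ k \<in> E_set k" and "0 \<le> t"
  shows "0 \<le> trans_mat Q t $ i $ j"
proof -
  define c where "c = (\<Sum>k\<in>UNIV. \<bar>Q $ k $ k\<bar>)"
  define B where "B = Abs_sqm Q + c *\<^sub>R 1"
  have RB: "Rep_sqm B = Q + c *\<^sub>R mat 1" by (simp add: B_def Abs_sqm_inverse)
  have Bnn: "0 \<le> Rep_sqm B $ k $ l" for k l
  proof (cases "k = l")
    case True
    have "\<bar>Q $ k $ k\<bar> \<le> c" unfolding c_def by (rule member_le_sum) auto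
    then show ?thesis using True by (simp add: RB mat_def)
  next
    case False
    then show ?thesis using E_offdiag[OF assms(1), of l k] by (simp add: RB mat_def)
  qed
  have eq: "t *\<^sub>R Abs_sqm Q = t *\<^sub>R B + (- (t * c)) *\<^sub>R 1"
    by (simp add: sqm_eq_iff vec_eq_iff B_def Abs_sqm_inverse algebra_simps)
  have comm: "(t *\<^sub>R B) * ((- (t * c)) *\<^sub>R 1) = ((- (t * c)) *\<^sub>R 1) * (t *\<^sub>R B)"
    by simp
  have "exp (t *\<^sub>R Abs_sqm Q) = exp (t *\<^sub>R B) * exp ((- (t * c)) *\<^sub>R (1 :: 'a sqm))"
    unfolding eq by (rule exp_add_commuting[OF comm])
  also have "exp ((- (t * c)) *\<^sub>R (1 :: 'a sqm)) = exp (- (t * c)) *\<^sub>R 1"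
    using exp_of_real[of "- (t * c)", where 'a="'a sqm"] unfolding of_real_def .
  finally have "exp (t *\<^sub>R Abs_sqm Q) = exp (- (t * c)) *\<^sub>R exp (t *\<^sub>R B)" by simp
  then have "trans_mat Q t $ i $ j = exp (- (t * c)) * Rep_sqm (exp (t *\<^sub>R B)) $ i $ j"
    by (simp add: trans_mat_exp)
  then show ?thesis using exp_nonneg_entries[OF Bnn assms(2)] by simp
qed

lemma trans_mat_le1:
  assumes "\<And>k. Q $ k \<in> E_set k" and "0 \<le> t"
  shows "trans_mat Q t $ i $ j \<le> 1"
proof -
  have "trans_mat Q t $ i $ j \<le> (\<Sum>j\<in>UNIV. trans_mat Q t $ i $ j)"
    by (rule member_le_sum) (simp_all add: trans_mat_nonneg[OF assms])
  then show ?thesis using trans_mat_rowsum[OF assms(1)] by simp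
qed

lemma trans_mat_abs_le1:
  assumes "\<And>k. Q $ k \<in> E_set k" and "0 \<le> t"
  shows "\<bar>trans_mat Q t $ i $ j\<bar> \<le> 1"
  using trans_mat_le1[OF assms] trans_mat_nonneg[OF assms] by simp



context
  fixes D :: "'n::finite \<Rightarrow> (real^'n) set" and f :: "real \<Rightarrow> 'n \<Rightarrow> real^'n \<Rightarrow> real"
  assumes C: "condC D f" and I: "condI D f"
begin

lemma f_cont: "q \<in> D j \<Longrightarrow> continuous_on {0..} (\<lambda>t. f t j q)"
  using C unfolding condC_def by blast

lemma f_setint:
  assumes "q \<in> D j"
  shows "set_integrable lborel {0..} (\<lambda>t. f t j q)"
proof -
  define c where "c = norm q + 1"
  have c: "c > 0" unfolding c_def by (simp add: add_nonneg_pos)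
  define G where "G t = (SUP p\<in>{(i, q). q \<in> D i \<and> norm q \<le> c}. ennreal \<bar>f t (fst p) (snd p)\<bar>)" for t
  have fin: "(\<integral>\<^sup>+ t. G t * indicator {0..} t \<partial>lborel) < \<infinity>"
    using I c unfolding condI_def G_def by blast
  have meas: "(\<lambda>t. indicator {0..} t *\<^sub>R f t j q) \<in> borel_measurable lborel"
    using borel_measurable_continuous_on_indicator[OF _ f_cont[OF assms]] by simp
  have "(\<integral>\<^sup>+ t. ennreal (norm (indicator {0..} t *\<^sub>R f t j q)) \<partial>lborel) \<le> (\<integral>\<^sup>+ t. G t * indicator {0..} t \<partial>lborel)"
  proof (rule nn_integral_mono)
    fix t
    have "(j, q) \<in> {(i, q). q \<in> D i \<and> norm q \<le> c}" using assms by (simp add: c_def)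
    then have "ennreal \<bar>f t j q\<bar> \<le> G t" unfolding G_def
      by (metis (no_types, lifting) SUP_upper fst_conv snd_conv)
    then show "ennreal (norm (indicator {0..} t *\<^sub>R f t j q)) \<le> G t * indicator {0..} t"
      by (auto split: split_indicator)
  qed
  then have "(\<integral>\<^sup>+ t. ennreal (norm (indicator {0..} t *\<^sub>R f t j q)) \<partial>lborel) < \<infinity>"
    using fin by (rule le_less_trans)
  then show ?thesis unfolding set_integrable_def
    by (rule integrableI_bounded[OF meas])
qed

lemma Phi_setint:
  assumes X: "\<And>j. X $ j \<in> D j"
  shows "set_integrable lborel {0..} (\<lambda>t. \<Sum>j\<in>UNIV. \<bar>f t j (X $ j)\<bar>)"
proof -
  have "integrable lborel (\<lambda>t. \<Sum>j\<in>UNIV. indicator {0..} t *\<^sub>R \<bar>f t j (X $ j)\<bar>)"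
    by (rule Bochner_Integration.integrable_sum) (rule set_integrable_abs[OF f_setint[OF X], unfolded set_integrable_def])
  then show ?thesis unfolding set_integrable_def by (simp only: scaleR_sum_right)
qed

definition Bd :: "real^'n^'n \<Rightarrow> real" where
  "Bd X = (LINT t:{0..}|lborel. \<Sum>j\<in>UNIV. \<bar>f t j (X $ j)\<bar>)"

lemma row_setint:
  assumes X: "\<And>j. X $ j \<in> D j" and S: "S \<in> sets borel" "S \<subseteq> {0..}"
    and cont: "\<And>k j. continuous_on S (\<lambda>t. M t $ k $ j)"
    and bd: "\<And>t k j. t \<in> S \<Longrightarrow> \<bar>M t $ k $ j\<bar> \<le> 1"
  shows "set_integrable lborel S (\<lambda>t. \<Sum>j\<in>UNIV. M t $ k $ j * f t j (X $ j))" (is ?A)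
    and "\<bar>LINT t:S|lborel. \<Sum>j\<in>UNIV. M t $ k $ j * f t j (X $ j)\<bar> \<le> Bd X" (is ?B)
proof -
  have Phi: "set_integrable lborel S (\<lambda>t. \<Sum>j\<in>UNIV. \<bar>f t j (X $ j)\<bar>)"
    by (rule set_integrable_subset[OF Phi_setint[OF X]]) (use S in auto)
  have hcont: "continuous_on S (\<lambda>t. \<Sum>j\<in>UNIV. M t $ k $ j * f t j (X $ j))"
    by (intro continuous_on_sum continuous_on_mult cont continuous_on_subset[OF f_cont[OF X] S(2)])
  have meas: "set_borel_measurable lborel S (\<lambda>t. \<Sum>j\<in>UNIV. M t $ k $ j * f t j (X $ j))"
    unfolding set_borel_measurable_def
    using borel_measurable_continuous_on_indicator[OF S(1) hcont] by simp
  have pw: "\<bar>\<Sum>j\<in>UNIV. M t $ k $ j * f t j (X $ j)\<bar> \<le> (\<Sum>j\<in>UNIV. \<bar>f t j (X $ j)\<bar>)" if "t \<in> S" for t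
  proof -
    have "\<bar>\<Sum>j\<in>UNIV. M t $ k $ j * f t j (X $ j)\<bar> \<le> (\<Sum>j\<in>UNIV. \<bar>M t $ k $ j * f t j (X $ j)\<bar>)"
      by (rule sum_abs)
    also have "\<dots> \<le> (\<Sum>j\<in>UNIV. \<bar>f t j (X $ j)\<bar>)"
    proof (rule sum_mono)
      fix j
      have "\<bar>M t $ k $ j\<bar> * \<bar>f t j (X $ j)\<bar> \<le> 1 * \<bar>f t j (X $ j)\<bar>"
        by (rule mult_right_mono[OF bd[OF that]]) simp
      then show "\<bar>M t $ k $ j * f t j (X $ j)\<bar> \<le> \<bar>f t j (X $ j)\<bar>" by (simp add: abs_mult)
    qed
    finally show ?thesis .
  qed
  show ?A
    by (rule set_integrable_bound[OF Phi meas]) (auto intro!: AE_I2 order_trans[OF pw])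
  have "\<bar>LINT t:S|lborel. \<Sum>j\<in>UNIV. M t $ k $ j * f t j (X $ j)\<bar>
      \<le> (LINT t:S|lborel. \<bar>\<Sum>j\<in>UNIV. M t $ k $ j * f t j (X $ j)\<bar>)"
    using set_integral_norm_bound[OF \<open>?A\<close>] by simp
  also have "\<dots> \<le> (LINT t:S|lborel. \<Sum>j\<in>UNIV. \<bar>f t j (X $ j)\<bar>)"
    by (rule set_integral_mono[OF set_integrable_abs[OF \<open>?A\<close>] Phi pw])
  also have "\<dots> \<le> Bd X"
    unfolding Bd_def set_lebesgue_integral_def
  proof (rule integral_mono)
    show "integrable lborel (\<lambda>x. indicat_real S x *\<^sub>R (\<Sum>j\<in>UNIV. \<bar>f x j (X $ j)\<bar>))"
      using Phi unfolding set_integrable_def .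
    show "integrable lborel (\<lambda>x. indicat_real {0..} x *\<^sub>R (\<Sum>j\<in>UNIV. \<bar>f x j (X $ j)\<bar>))"
      using Phi_setint[OF X] unfolding set_integrable_def .
    fix x
    show "indicat_real S x *\<^sub>R (\<Sum>j\<in>UNIV. \<bar>f x j (X $ j)\<bar>) \<le> indicat_real {0..} x *\<^sub>R (\<Sum>j\<in>UNIV. \<bar>f x j (X $ j)\<bar>)"
      using S(2) by (auto split: split_indicator intro: sum_nonneg)
  qed
  finally show ?B .
qed


definition vfun :: "real^'n^'n \<Rightarrow> real \<Rightarrow> 'n \<Rightarrow> real" where
  "vfun Qs e k = (LINT t:{e<..}|lborel. \<Sum>j\<in>UNIV. trans_mat Qs (t - e) $ k $ j * f t j (Qs $ j))"

definition Afun :: "real^'n^'n \<Rightarrow> real \<Rightarrow> 'n \<Rightarrow> real" where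
  "Afun X e i = (LINT t:{0..e}|lborel. \<Sum>j\<in>UNIV. trans_mat X t $ i $ j * f t j (X $ j))"

lemma cont_shift: "continuous_on S (\<lambda>t. trans_mat Q (t - e) $ k $ j)"
  by (rule continuous_on_compose2[OF trans_mat_cont[of UNIV]]) (auto intro!: continuous_intros)

lemma vfun_int:
  assumes XD: "\<And>j. Qs $ j \<in> D j" and XE: "\<And>k. Qs $ k \<in> E_set k" and e: "0 \<le> e"
  shows "set_integrable lborel {e<..} (\<lambda>t. \<Sum>j\<in>UNIV. trans_mat Qs (t - e) $ k $ j * f t j (Qs $ j))"
    and "\<bar>vfun Qs e k\<bar> \<le> Bd Qs"
proof -
  have S: "{e<..} \<in> sets borel" "{e<..} \<subseteq> {0..}" using e by auto
  have bd: "\<bar>trans_mat Qs (t - e) $ k $ j\<bar> \<le> 1" if "t \<in> {e<..}" for t k j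
    using that by (intro trans_mat_abs_le1[OF XE]) auto
  show "set_integrable lborel {e<..} (\<lambda>t. \<Sum>j\<in>UNIV. trans_mat Qs (t - e) $ k $ j * f t j (Qs $ j))"
    by (rule row_setint(1)[OF XD S cont_shift bd])
  show "\<bar>vfun Qs e k\<bar> \<le> Bd Qs"
    unfolding vfun_def by (rule row_setint(2)[OF XD S cont_shift bd])
qed

lemma Fshift_vfun:
  assumes XD: "\<And>j. Qs $ j \<in> D j" and e: "0 \<le> e"
  shows "Fshift f e Qs k = vfun Qs e k"
proof -
  define H where "H t = (\<Sum>j\<in>UNIV. trans_mat Qs (t - e) $ k $ j * f t j (Qs $ j))" for t
  have "Fshift f e Qs k = (\<integral>x. indicator {e..} (e + 1 * x) *\<^sub>R H (e + 1 * x) \<partial>lborel)"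
    unfolding Fshift_def set_lebesgue_integral_def
    by (rule Bochner_Integration.integral_cong) (auto simp: H_def add.commute indicator_def)
  also have "\<dots> = (\<integral>x. indicator {e..} x *\<^sub>R H x \<partial>lborel)"
    using lborel_integral_real_affine[of 1 "\<lambda>x. indicator {e..} x *\<^sub>R H x" e] by simp
  also have "\<dots> = (LINT x:{e..}|lborel. H x)" by (simp add: set_lebesgue_integral_def)
  also have "\<dots> = (LINT x:{e<..}|lborel. H x)"
  proof (rule set_integral_cong_set)
    have Hc: "continuous_on {e..} H" unfolding H_def
      by (intro continuous_on_sum continuous_on_mult cont_shift
          continuous_on_subset[OF f_cont[OF XD]]) (use e in auto)
    have "continuous_on {e<..} H" by (rule continuous_on_subset[OF Hc]) auto
    then show "set_borel_measurable lborel {e<..} H"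
      unfolding set_borel_measurable_def
      using borel_measurable_continuous_on_indicator[of "{e<..}" H] by simp
    show "set_borel_measurable lborel {e..} H"
      unfolding set_borel_measurable_def
      using borel_measurable_continuous_on_indicator[of "{e..}" H] Hc by auto
    show "AE x in lborel. (x \<in> {e<..}) = (x \<in> {e..})"
      using AE_lborel_singleton[of e] by eventually_elim auto
  qed
  finally show ?thesis by (simp add: vfun_def H_def)
qed

lemma set_integral_sum_cmult:
  fixes h :: "'n \<Rightarrow> real \<Rightarrow> real" and c :: "'n \<Rightarrow> real"
  assumes "\<And>k. set_integrable lborel A (h k)"
  shows "(LINT t:A|lborel. \<Sum>k\<in>(UNIV::'n set). c k * h k t) = (\<Sum>k\<in>UNIV. c k * (LINT t:A|lborel. h k t))"
proof -
  have "(LINT t:A|lborel. \<Sum>k\<in>(UNIV::'n set). c k * h k t)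
      = (\<integral>t. (\<Sum>k\<in>(UNIV::'n set). c k * (indicator A t *\<^sub>R h k t)) \<partial>lborel)"
    unfolding set_lebesgue_integral_def
    by (rule Bochner_Integration.integral_cong) (simp_all add: real_scaleR_def sum_distrib_left mult_ac)
  also have "\<dots> = (\<Sum>k\<in>UNIV. (\<integral>t. c k * (indicator A t *\<^sub>R h k t) \<partial>lborel))"
    by (rule Bochner_Integration.integral_sum)
       (use assms in \<open>auto simp: set_integrable_def\<close>)
  also have "\<dots> = (\<Sum>k\<in>UNIV. c k * (LINT t:A|lborel. h k t))"
    by (simp add: set_lebesgue_integral_def)
  finally show ?thesis .
qed

lemma Fswitch_decomp:
  assumes QsD: "\<And>j. Qs $ j \<in> D j" and QsE: "\<And>k. Qs $ k \<in> E_set k" and e: "0 < e"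
  shows "Fswitch f X Qs e i = Afun X e i + (\<Sum>k\<in>UNIV. trans_mat X e $ i $ k * vfun Qs e k)"
proof -
  have rw: "(\<Sum>j\<in>UNIV. (trans_mat X e ** trans_mat Qs (t - e)) $ i $ j * f t j (Qs $ j))
      = (\<Sum>k\<in>UNIV. trans_mat X e $ i $ k * (\<Sum>j\<in>UNIV. trans_mat Qs (t - e) $ k $ j * f t j (Qs $ j)))" for t
  proof -
    have "(\<Sum>j\<in>UNIV. (trans_mat X e ** trans_mat Qs (t - e)) $ i $ j * f t j (Qs $ j))
        = (\<Sum>j\<in>UNIV. \<Sum>k\<in>UNIV. trans_mat X e $ i $ k * (trans_mat Qs (t - e) $ k $ j * f t j (Qs $ j)))"
      by (simp add: matrix_matrix_mult_def sum_distrib_right mult.assoc)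
    also have "\<dots> = (\<Sum>k\<in>UNIV. \<Sum>j\<in>UNIV. trans_mat X e $ i $ k * (trans_mat Qs (t - e) $ k $ j * f t j (Qs $ j)))"
      by (rule sum.swap)
    also have "\<dots> = (\<Sum>k\<in>UNIV. trans_mat X e $ i $ k * (\<Sum>j\<in>UNIV. trans_mat Qs (t - e) $ k $ j * f t j (Qs $ j)))"
      by (simp add: sum_distrib_left)
    finally show ?thesis .
  qed
  have "(LINT t:{e<..}|lborel. \<Sum>j\<in>UNIV. (trans_mat X e ** trans_mat Qs (t - e)) $ i $ j * f t j (Qs $ j))
      = (LINT t:{e<..}|lborel. \<Sum>k\<in>UNIV. trans_mat X e $ i $ k * (\<Sum>j\<in>UNIV. trans_mat Qs (t - e) $ k $ j * f t j (Qs $ j)))"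
    by (simp only: rw)
  also have "\<dots> = (\<Sum>k\<in>UNIV. trans_mat X e $ i $ k * vfun Qs e k)"
    unfolding vfun_def
    by (rule set_integral_sum_cmult) (rule vfun_int(1)[OF QsD QsE], use e in simp)
  finally show ?thesis by (simp add: Fswitch_def Afun_def)
qed

lemma Fval_split:
  assumes QsD: "\<And>j. Qs $ j \<in> D j" and QsE: "\<And>k. Qs $ k \<in> E_set k" and e: "0 < e"
  shows "Fval f Qs i = Fswitch f Qs Qs e i"
proof -
  define h where "h t = (\<Sum>j\<in>UNIV. trans_mat Qs t $ i $ j * f t j (Qs $ j))" for t
  have bd: "\<bar>trans_mat Qs t $ k $ j\<bar> \<le> 1" if "t \<in> S" "S \<subseteq> {0..}" for t k j S
    using that by (intro trans_mat_abs_le1[OF QsE]) auto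
  have i1: "set_integrable lborel {0..e} h" unfolding h_def
    by (rule row_setint(1)[OF QsD _ _ trans_mat_cont]) (auto intro!: trans_mat_abs_le1[OF QsE])
  have i2: "set_integrable lborel {e<..} h" unfolding h_def
    by (rule row_setint(1)[OF QsD _ _ trans_mat_cont]) (use e in \<open>auto intro!: trans_mat_abs_le1[OF QsE]\<close>)
  have un: "{0..} = {0..e} \<union> {e<..}" using e by auto
  have "Fval f Qs i = (LINT t:{0..e}|lborel. h t) + (LINT t:{e<..}|lborel. h t)"
    unfolding Fval_def h_def[symmetric] un
    by (rule set_integral_Un[OF _ i1 i2]) auto
  also have "(LINT t:{e<..}|lborel. h t)
      = (LINT t:{e<..}|lborel. \<Sum>j\<in>UNIV. (trans_mat Qs e ** trans_mat Qs (t - e)) $ i $ j * f t j (Qs $ j))"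
  proof (rule set_lebesgue_integral_cong)
    show "{e<..} \<in> sets lborel" by simp
    show "\<forall>x. x \<in> {e<..} \<longrightarrow> h x = (\<Sum>j\<in>UNIV. (trans_mat Qs e ** trans_mat Qs (x - e)) $ i $ j * f x j (Qs $ j))"
      by (auto simp: h_def trans_mat_add[symmetric])
  qed
  finally show ?thesis by (simp add: Fswitch_def h_def)
qed

lemma mat1_sum: "(\<Sum>j\<in>UNIV. (mat 1 :: real^'n^'n) $ i $ j * g j) = g i"
proof -
  have "(\<Sum>j\<in>UNIV. (mat 1 :: real^'n^'n) $ i $ j * g j) = (\<Sum>j\<in>UNIV. if i = j then g j else 0)"
    by (rule sum.cong) (auto simp: mat_def)
  then show ?thesis by simp
qed

lemma Afun_deriv:
  assumes XD: "\<And>j. X $ j \<in> D j"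
  shows "((\<lambda>e. Afun X e i / e) \<longlongrightarrow> f 0 i (X $ i)) (at_right 0)"
proof -
  define h where "h t = (\<Sum>j\<in>UNIV. trans_mat X t $ i $ j * f t j (X $ j))" for t
  have hc: "continuous_on {0..1} h" unfolding h_def
    by (intro continuous_on_sum continuous_on_mult trans_mat_cont
        continuous_on_subset[OF f_cont[OF XD]]) auto
  have h0: "h 0 = f 0 i (X $ i)" by (simp add: h_def trans_mat_zero mat1_sum)
  have "((\<lambda>u. integral {0..u} h) has_vector_derivative h 0) (at 0 within {0..1})"
    by (rule integral_has_vector_derivative[OF hc]) simp
  then have "((\<lambda>u. integral {0..u} h) has_real_derivative h 0) (at 0 within {0..1})"
    by (simp add: has_real_derivative_iff_has_vector_derivative)
  then have lim: "((\<lambda>y. (integral {0..y} h - integral {0..0} h) / (y - 0)) \<longlongrightarrow> h 0) (at_right 0)"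
    unfolding has_field_derivative_iff at_within_Icc_at_right[OF zero_less_one] .
  have ev: "\<forall>\<^sub>F y in at_right 0. (integral {0..y} h - integral {0..0} h) / (y - 0) = Afun X y i / y"
  proof -
    have "\<forall>\<^sub>F y in at_right (0::real). y < 1"
      unfolding eventually_at_right_field by (rule exI[of _ 1]) auto
    then show ?thesis
    proof (rule eventually_mono)
      fix y :: real assume y1: "y < 1"
      show "(integral {0..y} h - integral {0..0} h) / (y - 0) = Afun X y i / y"
      proof (cases "0 \<le> y")
        case True
        have "continuous_on {0..y} h" by (rule continuous_on_subset[OF hc]) (use y1 in auto)
        then have "set_integrable lborel {0..y} h"
          unfolding set_integrable_def by (rule borel_integrable_compact[OF compact_Icc])
        then have "Afun X y i = integral {0..y} h"
          unfolding Afun_def h_def[symmetric] by (rule set_borel_integral_eq_integral(2))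
        then show ?thesis by simp
      next
        case False
        then show ?thesis by (simp add: Afun_def set_lebesgue_integral_def)
      qed
    qed
  qed
  show ?thesis using Lim_transform_eventually[OF lim ev] h0 by simp
qed

lemma Afun_zero:
  assumes XD: "\<And>j. X $ j \<in> D j"
  shows "((\<lambda>e. Afun X e i) \<longlongrightarrow> 0) (at_right 0)"
proof -
  have "((\<lambda>e. e * (Afun X e i / e)) \<longlongrightarrow> 0 * f 0 i (X $ i)) (at_right 0)"
    by (intro tendsto_mult Afun_deriv[OF XD]) (simp add: tendsto_ident_at)
  moreover have "\<forall>\<^sub>F e in at_right (0::real). e * (Afun X e i / e) = Afun X e i"
    using eventually_at_right_less by (rule eventually_mono) simp
  ultimately show ?thesis using Lim_transform_eventually by fastforce
qed

lemma trans_mat_lim0: "((\<lambda>e. trans_mat Q e $ i $ k) \<longlongrightarrow> mat 1 $ i $ k) (at_right 0)"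
proof -
  have "continuous (at 0 within {0<..}) (\<lambda>e. trans_mat Q e $ i $ k)"
    by (rule has_vector_derivative_continuous[OF trans_mat_vderiv])
  then show ?thesis by (simp add: continuous_within trans_mat_zero)
qed

lemma bounded_times_null:
  fixes a b :: "real \<Rightarrow> real" and B :: real
  assumes "(a \<longlongrightarrow> 0) (at_right (0::real))" and "\<forall>\<^sub>F e in at_right 0. \<bar>b e\<bar> \<le> B"
  shows "((\<lambda>e. a e * b e) \<longlongrightarrow> 0) (at_right 0)"
proof (rule Lim_null_comparison)
  show "\<forall>\<^sub>F e in at_right 0. norm (a e * b e) \<le> \<bar>a e\<bar> * B"
    using assms(2) by (rule eventually_mono) (simp add: abs_mult mult_left_mono)
  have "((\<lambda>e. \<bar>a e\<bar>) \<longlongrightarrow> 0) (at_right 0)" using tendsto_rabs_zero[OF assms(1)] .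
  then show "((\<lambda>e. \<bar>a e\<bar> * B) \<longlongrightarrow> 0) (at_right 0)"
    using tendsto_mult_left_zero by blast
qed

lemma vfun_bounded_ev:
  assumes QsD: "\<And>j. Qs $ j \<in> D j" and QsE: "\<And>k. Qs $ k \<in> E_set k"
  shows "\<forall>\<^sub>F e in at_right 0. \<bar>vfun Qs e k\<bar> \<le> Bd Qs"
  using eventually_at_right_less by (rule eventually_mono) (rule vfun_int(2)[OF QsD QsE], simp)

lemma vfun_lim:
  assumes QsD: "\<And>j. Qs $ j \<in> D j" and QsE: "\<And>k. Qs $ k \<in> E_set k"
  shows "((\<lambda>e. vfun Qs e k) \<longlongrightarrow> Fval f Qs k) (at_right 0)"
proof -
  have lim: "((\<lambda>e. Fval f Qs k - Afun Qs e k - (\<Sum>m\<in>UNIV. (trans_mat Qs e $ k $ m - mat 1 $ k $ m) * vfun Qs e m))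
      \<longlongrightarrow> Fval f Qs k - 0 - 0) (at_right 0)"
  proof (intro tendsto_diff tendsto_const Afun_zero[OF QsD] tendsto_null_sum bounded_times_null)
    fix m
    show "((\<lambda>e. trans_mat Qs e $ k $ m - mat 1 $ k $ m) \<longlongrightarrow> 0) (at_right 0)"
      using tendsto_diff[OF trans_mat_lim0 tendsto_const, of Qs k m "mat 1 $ k $ m"] by simp
    show "\<forall>\<^sub>F e in at_right 0. \<bar>vfun Qs e m\<bar> \<le> Bd Qs" by (rule vfun_bounded_ev[OF QsD QsE])
  qed
  have ev: "\<forall>\<^sub>F e in at_right 0. Fval f Qs k - Afun Qs e k - (\<Sum>m\<in>UNIV. (trans_mat Qs e $ k $ m - mat 1 $ k $ m) * vfun Qs e m) = vfun Qs e k"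
    using eventually_at_right_less
  proof (rule eventually_mono)
    fix e :: real assume e: "0 < e"
    have "Fval f Qs k = Afun Qs e k + (\<Sum>m\<in>UNIV. trans_mat Qs e $ k $ m * vfun Qs e m)"
      using Fval_split[OF QsD QsE e] Fswitch_decomp[OF QsD QsE e] by simp
    moreover have "(\<Sum>m\<in>UNIV. (trans_mat Qs e $ k $ m - mat 1 $ k $ m) * vfun Qs e m)
        = (\<Sum>m\<in>UNIV. trans_mat Qs e $ k $ m * vfun Qs e m) - vfun Qs e k"
      by (simp add: left_diff_distrib sum_subtractf mat1_sum)
    ultimately show "Fval f Qs k - Afun Qs e k - (\<Sum>m\<in>UNIV. (trans_mat Qs e $ k $ m - mat 1 $ k $ m) * vfun Qs e m) = vfun Qs e k"
      by simp
  qed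
  show ?thesis using Lim_transform_eventually[OF lim ev] by simp
qed

lemma alg1:
  fixes A f0 SP SD SX e :: real
  assumes "e \<noteq> 0"
  shows "A / e - f0 + ((SP - SD) / e - SX) = (A + SP - SD - (f0 + SX) * e) / e"
  using assms by (simp add: field_simps)

lemma sum_a_rw:
  fixes e :: real
  assumes "e \<noteq> 0"
  shows "(\<Sum>k\<in>UNIV. ((p k - d k) / e - x k) * v k)
       = ((\<Sum>k\<in>(UNIV::'n set). p k * v k) - (\<Sum>k\<in>UNIV. d k * v k)) / e - (\<Sum>k\<in>UNIV. v k * x k)"
proof -
  have "(\<Sum>k\<in>UNIV. ((p k - d k) / e - x k) * v k) = (\<Sum>k\<in>(UNIV::'n set). (p k * v k - d k * v k) / e - v k * x k)"
    by (rule sum.cong) (auto simp: field_simps)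
  also have "\<dots> = (\<Sum>k\<in>(UNIV::'n set). (p k * v k - d k * v k) / e) - (\<Sum>k\<in>UNIV. v k * x k)"
    by (rule sum_subtractf)
  also have "(\<Sum>k\<in>(UNIV::'n set). (p k * v k - d k * v k) / e) = (\<Sum>k\<in>(UNIV::'n set). p k * v k - d k * v k) / e"
    by (rule sum_divide_distrib[symmetric])
  also have "(\<Sum>k\<in>(UNIV::'n set). p k * v k - d k * v k) = (\<Sum>k\<in>(UNIV::'n set). p k * v k) - (\<Sum>k\<in>UNIV. d k * v k)"
    by (rule sum_subtractf)
  finally show ?thesis .
qed

lemma claim1:
  assumes XD: "\<And>j. X $ j \<in> D j" and XE: "\<And>k. X $ k \<in> E_set k"
    and QsD: "\<And>j. Qs $ j \<in> D j" and QsE: "\<And>k. Qs $ k \<in> E_set k"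
  shows "((\<lambda>e. (Fswitch f X Qs e i - Fshift f e Qs i
              - (f 0 i (X $ i) + (\<chi> j. Fshift f e Qs j) \<bullet> (X $ i)) * e) / e) \<longlongrightarrow> 0) (at_right 0)"
proof -
  define a where "a e k = (trans_mat X e $ i $ k - mat 1 $ i $ k) / e - X $ i $ k" for e k
  have lim: "((\<lambda>e. (Afun X e i / e - f 0 i (X $ i)) + (\<Sum>k\<in>UNIV. a e k * vfun Qs e k)) \<longlongrightarrow> 0 + 0) (at_right 0)"
  proof (intro tendsto_add tendsto_null_sum bounded_times_null)
    show "((\<lambda>e. Afun X e i / e - f 0 i (X $ i)) \<longlongrightarrow> 0) (at_right 0)"
      using tendsto_diff[OF Afun_deriv[OF XD] tendsto_const, of i "f 0 i (X $ i)"] by simp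
    fix k
    show "((\<lambda>e. a e k) \<longlongrightarrow> 0) (at_right 0)" unfolding a_def
      using tendsto_diff[OF trans_mat_deriv0 tendsto_const, of X i k "X $ i $ k"] by simp
    show "\<forall>\<^sub>F e in at_right 0. \<bar>vfun Qs e k\<bar> \<le> Bd Qs" by (rule vfun_bounded_ev[OF QsD QsE])
  qed
  have ev: "\<forall>\<^sub>F e in at_right 0. (Afun X e i / e - f 0 i (X $ i)) + (\<Sum>k\<in>UNIV. a e k * vfun Qs e k)
      = (Fswitch f X Qs e i - Fshift f e Qs i - (f 0 i (X $ i) + (\<chi> j. Fshift f e Qs j) \<bullet> (X $ i)) * e) / e"
    using eventually_at_right_less
  proof (rule eventually_mono)
    fix e :: real assume e: "0 < e"
    have Fs: "Fshift f e Qs j = vfun Qs e j" for j by (rule Fshift_vfun[OF QsD]) (use e in simp)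
    have inner: "(\<chi> j. Fshift f e Qs j) \<bullet> (X $ i) = (\<Sum>k\<in>UNIV. vfun Qs e k * X $ i $ k)"
      by (simp add: inner_vec_def Fs)
    have sw: "Fswitch f X Qs e i = Afun X e i + (\<Sum>k\<in>UNIV. trans_mat X e $ i $ k * vfun Qs e k)"
      by (rule Fswitch_decomp[OF QsD QsE e])
    have vi: "Fshift f e Qs i = (\<Sum>k\<in>UNIV. mat 1 $ i $ k * vfun Qs e k)" by (simp add: mat1_sum Fs)
    have sa: "(\<Sum>k\<in>UNIV. a e k * vfun Qs e k)
        = ((\<Sum>k\<in>UNIV. trans_mat X e $ i $ k * vfun Qs e k) - (\<Sum>k\<in>UNIV. mat 1 $ i $ k * vfun Qs e k)) / e
          - (\<Sum>k\<in>UNIV. vfun Qs e k * X $ i $ k)"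
      unfolding a_def by (rule sum_a_rw) (use e in simp)
    show "(Afun X e i / e - f 0 i (X $ i)) + (\<Sum>k\<in>UNIV. a e k * vfun Qs e k)
      = (Fswitch f X Qs e i - Fshift f e Qs i - (f 0 i (X $ i) + (\<chi> j. Fshift f e Qs j) \<bullet> (X $ i)) * e) / e"
      unfolding sa sw vi inner by (rule alg1) (use e in simp)
  qed
  show ?thesis using Lim_transform_eventually[OF lim ev] by simp
qed

lemma sum4:
  fixes x y p q :: "'n \<Rightarrow> real"
  shows "(\<Sum>k\<in>(UNIV::'n set). (x k - y k) * (p k - q k))
   = (\<Sum>k\<in>UNIV. x k * p k) - (\<Sum>k\<in>UNIV. x k * q k) - (\<Sum>k\<in>UNIV. p k * y k) + (\<Sum>k\<in>UNIV. q k * y k)"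
proof -
  have "(\<Sum>k\<in>(UNIV::'n set). (x k - y k) * (p k - q k))
      = (\<Sum>k\<in>(UNIV::'n set). ((x k * p k - x k * q k) - p k * y k) + q k * y k)"
    by (rule sum.cong) (auto simp: algebra_simps)
  then show ?thesis by (simp add: sum_subtractf sum.distrib)
qed

lemma alg2:
  fixes e :: real
  assumes "e \<noteq> 0"
  shows "(W1 - Fi - (f0s + a) * e) / e - (W2 - Fi - (f0q + b) * e) / e + (a - b - c + d)
       = (W1 - W2 - ((f0s + c) - (f0q + d)) * e) / e"
  using assms by (simp add: field_simps)

lemma claim2:
  assumes QD: "\<And>j. Q $ j \<in> D j" and QE: "\<And>k. Q $ k \<in> E_set k"
    and QsD: "\<And>j. Qs $ j \<in> D j" and QsE: "\<And>k. Qs $ k \<in> E_set k"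
  shows "((\<lambda>e. (Fval f Qs i - Fswitch f Q Qs e i
              - (GammaQ f Qs i (Qs $ i) - GammaQ f Qs i (Q $ i)) * e) / e) \<longlongrightarrow> 0) (at_right 0)"
proof -
  define E where "E X e = (Fswitch f X Qs e i - Fshift f e Qs i
              - (f 0 i (X $ i) + (\<chi> j. Fshift f e Qs j) \<bullet> (X $ i)) * e) / e" for X e
  have FsF: "((\<lambda>e. Fshift f e Qs k) \<longlongrightarrow> Fval f Qs k) (at_right 0)" for k
  proof -
    have "\<forall>\<^sub>F e in at_right 0. vfun Qs e k = Fshift f e Qs k"
      using eventually_at_right_less by (rule eventually_mono) (rule Fshift_vfun[OF QsD, symmetric], simp)
    then show ?thesis by (rule Lim_transform_eventually[OF vfun_lim[OF QsD QsE]])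
  qed
  have lim: "((\<lambda>e. E Qs e - E Q e + (\<Sum>k\<in>UNIV. (Fshift f e Qs k - Fval f Qs k) * (Qs $ i $ k - Q $ i $ k)))
      \<longlongrightarrow> 0 - 0 + 0) (at_right 0)"
  proof (intro tendsto_add tendsto_diff tendsto_null_sum tendsto_mult_left_zero)
    show "(E Qs \<longlongrightarrow> 0) (at_right 0)" unfolding E_def by (rule claim1[OF QsD QsE QsD QsE])
    show "(E Q \<longlongrightarrow> 0) (at_right 0)" unfolding E_def by (rule claim1[OF QD QE QsD QsE])
    fix k
    show "((\<lambda>e. Fshift f e Qs k - Fval f Qs k) \<longlongrightarrow> 0) (at_right 0)"
      using tendsto_diff[OF FsF tendsto_const, of k "Fval f Qs k"] by simp
  qed
  have ev: "\<forall>\<^sub>F e in at_right 0. E Qs e - E Q e + (\<Sum>k\<in>UNIV. (Fshift f e Qs k - Fval f Qs k) * (Qs $ i $ k - Q $ i $ k))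
      = (Fval f Qs i - Fswitch f Q Qs e i - (GammaQ f Qs i (Qs $ i) - GammaQ f Qs i (Q $ i)) * e) / e"
    using eventually_at_right_less
  proof (rule eventually_mono)
    fix e :: real assume e: "0 < e"
    have i1: "(\<chi> j. Fshift f e Qs j) \<bullet> (X $ i) = (\<Sum>k\<in>UNIV. Fshift f e Qs k * X $ i $ k)" for X :: "real^'n^'n"
      by (simp add: inner_vec_def)
    have i2: "GammaQ f Qs i (X $ i) = f 0 i (X $ i) + (\<Sum>k\<in>UNIV. X $ i $ k * Fval f Qs k)" for X :: "real^'n^'n"
      by (simp add: GammaQ_def inner_vec_def)
    show "E Qs e - E Q e + (\<Sum>k\<in>UNIV. (Fshift f e Qs k - Fval f Qs k) * (Qs $ i $ k - Q $ i $ k))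
      = (Fval f Qs i - Fswitch f Q Qs e i - (GammaQ f Qs i (Qs $ i) - GammaQ f Qs i (Q $ i)) * e) / e"
      unfolding E_def i1 i2 sum4 Fval_split[OF QsD QsE e, of i]
      by (rule alg2) (use e in simp)
  qed
  show ?thesis using Lim_transform_eventually[OF lim ev] by simp
qed
end


theorem mainTheorem1:
  fixes D :: "'n::finite \<Rightarrow> (real^'n) set"
    and f :: "real \<Rightarrow> 'n \<Rightarrow> real^'n \<Rightarrow> real"
    and Q Qs :: "real^'n^'n"
    and i :: 'n
  assumes DE: "\<And>j. D j \<subseteq> E_set j"
    and C: "condC D f" and I: "condI D f"
    and Q: "Q \<in> genset D" and Qs: "Qs \<in> genset D"
  shows "((\<lambda>\<epsilon>. (Fswitch f Q Qs \<epsilon> i - Fshift f \<epsilon> Qs i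
              - (f 0 i (Q $ i) + (\<chi> j. Fshift f \<epsilon> Qs j) \<bullet> (Q $ i)) * \<epsilon>) / \<epsilon>)
           \<longlongrightarrow> 0) (at_right 0)
       \<and> (condH D f \<longrightarrow>
          ((\<lambda>\<epsilon>. (Fval f Qs i - Fswitch f Q Qs \<epsilon> i
              - (GammaQ f Qs i (Qs $ i) - GammaQ f Qs i (Q $ i)) * \<epsilon>) / \<epsilon>)
           \<longlongrightarrow> 0) (at_right 0))"
proof -
  have QD: "\<And>j. Q $ j \<in> D j" and QsD: "\<And>j. Qs $ j \<in> D j"
    using Q Qs by (auto simp: genset_def)
  have QE: "\<And>j. Q $ j \<in> E_set j" and QsE: "\<And>j. Qs $ j \<in> E_set j"
    using QD QsD DE by blast+
  show ?thesis
    using claim1[OF C I QD QE QsD QsE, of i] claim2[OF C I QD QE QsD QsE, of i] by blast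
qed


end
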